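(* Let $\mathbf B_1\subset\mathbb R^n$ be the closed ball with centre $0$ and radius $1$, and let $U\subset\mathbb R^n$ be open with $\mathbf B_1\subset U$. Then for every $\varepsilon>0$ and every compact set $F\subset\operatorname{Int}\mathbf B_1$, the map $\operatorname{res}_{F,U}\circ\mathcal R_\varepsilon$ is a bounded linear operator $\Omega^k_p(U)\to\Omega^k_\infty(F)$.
   Context: Fix $1\le p<\infty$. $\Omega^k_p(U)$ denotes the closure of the smooth $k$-forms on $U$ with respect to the $L_p$-norm $\|\omega\|_p=(\int_U|\omega|^p\,dx)^{1/p}$. $\Omega^k_\infty(F)$ denotes the space of essentially bounded $k$-forms on $F$ with the norm $\operatorname{ess\,sup}_F|\omega|$. $\operatorname{res}_{F,U}$ is restriction of forms from $U$ to $F$. Construction of $\mathcal R_\varepsilon$: let $f\colon\mathbb R^n\to\mathbb R$ be smooth, with $\operatorname{supp}f\subset\mathbf B_1$, $f\ge0$, $f(v)=f(-v)$, $\int_{\mathbb R^n}f=1$, and put $\tau(v)=f(v)\,dv^0\cdots dv^{n-1}$. Let $h$ be a diffeomorphism of $\mathbb R^n$ onto the open unit ball. For $v\in\mathbb R^n$ let $s_v(x)=x+v$ and define $\mathfrak s_v\colon U\to U$ by $\mathfrak s_v(x)=h s_v h^{-1}(x)$ for $x$ in the open unit ball and $\mathfrak s_v(x)=x$ otherwise. Then $(\mathcal R_\varepsilon\omega)(x)=\int_{\mathbb R^n}(\mathfrak s^*_{\varepsilon v}\omega)(x)\,\tau(v)$. *)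

theory Defs
  imports "HOL-Analysis.Analysis"
begin

coinductive smooth_on :: "'a::euclidean_space set \<Rightarrow> ('a \<Rightarrow> 'b::real_normed_vector) \<Rightarrow> bool" where
  "\<lbrakk>\<forall>x\<in>S. f differentiable (at x);
    \<forall>i\<in>Basis. smooth_on S (\<lambda>x. frechet_derivative f (at x) i)\<rbrakk> \<Longrightarrow> smooth_on S f"

definition kcovector :: "nat \<Rightarrow> ('a::euclidean_space list \<Rightarrow> real) \<Rightarrow> bool" where
  "kcovector k \<alpha> \<longleftrightarrow>
     (\<forall>vs. length vs \<noteq> k \<longrightarrow> \<alpha> vs = 0) \<and>
     (\<forall>vs i. length vs = k \<longrightarrow> i < k \<longrightarrow> linear (\<lambda>v. \<alpha> (vs[i := v]))) \<and>
     (\<forall>vs i j. length vs = k \<longrightarrow> i < j \<longrightarrow> j < k \<longrightarrow> vs ! i = vs ! j \<longrightarrow> \<alpha> vs = 0)"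

text \<open>Pointwise (Euclidean) norm of a k-covector: square root of the sum of squares of its
  coefficients with respect to the standard basis, i.e. sum over increasing multi-indices I of
  alpha(e_I)^2.  Summing over all lists of basis vectors counts each I exactly k! times
  (lists with repetitions contribute 0).\<close>
definition form_norm :: "nat \<Rightarrow> ('a::euclidean_space list \<Rightarrow> real) \<Rightarrow> real" where
  "form_norm k \<alpha> =
     sqrt ((\<Sum>bs\<in>{bs. set bs \<subseteq> Basis \<and> length bs = k}. (\<alpha> bs)\<^sup>2) / fact k)"

definition is_kform_on :: "'a::euclidean_space set \<Rightarrow> nat \<Rightarrow> ('a \<Rightarrow> 'a list \<Rightarrow> real) \<Rightarrow> bool" where
  "is_kform_on S k \<omega> \<longleftrightarrow> (\<forall>x\<in>S. kcovector k (\<omega> x))"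

definition smooth_kform_on :: "'a::euclidean_space set \<Rightarrow> nat \<Rightarrow> ('a \<Rightarrow> 'a list \<Rightarrow> real) \<Rightarrow> bool" where
  "smooth_kform_on U k \<omega> \<longleftrightarrow> is_kform_on U k \<omega> \<and> (\<forall>vs. smooth_on U (\<lambda>x. \<omega> x vs))"

definition Lp_pow :: "real \<Rightarrow> nat \<Rightarrow> 'a::euclidean_space set \<Rightarrow> ('a \<Rightarrow> 'a list \<Rightarrow> real) \<Rightarrow> ennreal" where
  "Lp_pow p k U \<omega> = set_nn_integral lebesgue U (\<lambda>x. ennreal (form_norm k (\<omega> x) powr p))"

definition Lp_norm :: "real \<Rightarrow> nat \<Rightarrow> 'a::euclidean_space set \<Rightarrow> ('a \<Rightarrow> 'a list \<Rightarrow> real) \<Rightarrow> real" where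
  "Lp_norm p k U \<omega> = enn2real (Lp_pow p k U \<omega>) powr (1 / p)"

definition Omega_p :: "nat \<Rightarrow> real \<Rightarrow> 'a::euclidean_space set \<Rightarrow> ('a \<Rightarrow> 'a list \<Rightarrow> real) \<Rightarrow> bool" where
  "Omega_p k p U \<omega> \<longleftrightarrow>
     is_kform_on U k \<omega> \<and>
     (\<forall>vs. (\<lambda>x. \<omega> x vs) \<in> borel_measurable (lebesgue_on U)) \<and>
     Lp_pow p k U \<omega> < \<infinity> \<and>
     (\<exists>\<phi>. (\<forall>j. smooth_kform_on U k (\<phi> j)) \<and>
          (\<lambda>j. Lp_pow p k U (\<lambda>x vs. \<phi> j x vs - \<omega> x vs)) \<longlonglongrightarrow> 0)"

definition Omega_inf :: "nat \<Rightarrow> 'a::euclidean_space set \<Rightarrow> ('a \<Rightarrow> 'a list \<Rightarrow> real) \<Rightarrow> bool" where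
  "Omega_inf k F \<omega> \<longleftrightarrow>
     is_kform_on F k \<omega> \<and>
     (\<forall>vs. (\<lambda>x. \<omega> x vs) \<in> borel_measurable (lebesgue_on F)) \<and>
     (\<exists>M. AE x in lebesgue_on F. form_norm k (\<omega> x) \<le> M)"

definition pullback :: "('a::euclidean_space \<Rightarrow> 'a) \<Rightarrow> ('a \<Rightarrow> 'a list \<Rightarrow> real) \<Rightarrow> 'a \<Rightarrow> 'a list \<Rightarrow> real" where
  "pullback \<phi> \<omega> x vs = \<omega> (\<phi> x) (map (frechet_derivative \<phi> (at x)) vs)"

definition sfrak :: "('a::euclidean_space \<Rightarrow> 'a) \<Rightarrow> 'a \<Rightarrow> 'a \<Rightarrow> 'a" where
  "sfrak h v x = (if x \<in> ball 0 1 then h (inv h x + v) else x)"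

definition R_eps :: "('a::euclidean_space \<Rightarrow> 'a) \<Rightarrow> ('a \<Rightarrow> real) \<Rightarrow> real \<Rightarrow>
    ('a \<Rightarrow> 'a list \<Rightarrow> real) \<Rightarrow> 'a \<Rightarrow> 'a list \<Rightarrow> real" where
  "R_eps h f \<epsilon> \<omega> x vs = (LINT v|lebesgue. pullback (sfrak h (\<epsilon> *\<^sub>R v)) \<omega> x vs * f v)"

end

theory Submission
  imports Defs
begin

typedef (overloaded) ('a::euclidean_space) bidx = "Basis :: 'a set" morphisms bvec Abs_bidx
  using nonempty_Basis by blast

lemma bvec_inj: "inj bvec"
  by (meson bvec_inject injI)

lemma range_bvec: "range bvec = (Basis :: 'a::euclidean_space set)"
  using type_definition.Rep_range[OF type_definition_bidx] by simp

instance bidx :: (euclidean_space) finite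
proof
  have "(UNIV :: 'a bidx set) = Abs_bidx ` Basis"
    by (metis Abs_bidx_cases UNIV_eq_I imageI)
  then show "finite (UNIV :: 'a bidx set)" by (metis finite_Basis finite_imageI)
qed

definition bord :: "'a::euclidean_space bidx \<Rightarrow> nat" where
  "bord = (SOME g. inj g)"

lemma inj_bord: "inj bord"
proof -
  have "countable (UNIV :: 'a bidx set)" by (simp add: countable_finite)
  then obtain g :: "'a bidx \<Rightarrow> nat" where "inj g" unfolding countable_def by blast
  then show ?thesis unfolding bord_def by (metis someI_ex)
qed

instantiation bidx :: (euclidean_space) linorder
begin
definition less_eq_bidx :: "'a bidx \<Rightarrow> 'a bidx \<Rightarrow> bool" where "less_eq_bidx x y \<longleftrightarrow> bord x \<le> bord y"
definition less_bidx :: "'a bidx \<Rightarrow> 'a bidx \<Rightarrow> bool" where "less_bidx x y \<longleftrightarrow> bord x < bord y"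
instance
  by standard (auto simp: less_eq_bidx_def less_bidx_def inj_eq[OF inj_bord] intro: injD[OF inj_bord])
end

instance bidx :: (euclidean_space) wellorder
proof
  fix P :: "'a bidx \<Rightarrow> bool" and a
  assume H: "\<And>x. (\<And>y. y < x \<Longrightarrow> P y) \<Longrightarrow> P x"
  show "P a"
    by (induct a rule: measure_induct_rule[where f=bord]) (rule H, simp add: less_bidx_def)
qed

definition Lm :: "'a::euclidean_space \<Rightarrow> real^('a bidx)" where
  "Lm x = (\<chi> i. x \<bullet> bvec i)"
definition Li :: "real^('a::euclidean_space bidx) \<Rightarrow> 'a" where
  "Li z = (\<Sum>i\<in>UNIV. (z$i) *\<^sub>R bvec i)"

lemma bvec_Basis: "bvec i \<in> Basis"
  using bvec by blast

lemma Li_Lm [simp]: "Li (Lm x) = x"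
proof -
  have "Li (Lm x) = (\<Sum>i\<in>UNIV. (x \<bullet> bvec i) *\<^sub>R bvec i)" by (simp add: Li_def Lm_def)
  also have "\<dots> = (\<Sum>b\<in>Basis. (x \<bullet> b) *\<^sub>R b)"
    using sum.reindex[OF inj_on_subset[OF bvec_inj subset_UNIV], of "\<lambda>b. (x \<bullet> b) *\<^sub>R b" UNIV]
    by (simp add: range_bvec)
  also have "\<dots> = x" by (rule euclidean_representation)
  finally show ?thesis .
qed

lemma Lm_Li [simp]: "Lm (Li z) = z"
proof -
  have "Li z \<bullet> bvec j = z $ j" for j
  proof -
    have "Li z \<bullet> bvec j = (\<Sum>i\<in>UNIV. z$i * (bvec i \<bullet> bvec j))"
      by (simp add: Li_def inner_sum_left)
    also have "\<dots> = (\<Sum>i\<in>UNIV. if i = j then z$i else 0)"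
      by (rule sum.cong) (auto simp: inner_Basis bvec_Basis inj_eq[OF bvec_inj])
    finally show ?thesis by simp
  qed
  then show ?thesis by (simp add: Lm_def vec_eq_iff)
qed

lemma linear_Lm: "linear Lm"
  by (rule linearI) (auto simp: Lm_def vec_eq_iff inner_add_left)

lemma linear_Li: "linear Li"
  by (rule linearI) (auto simp: Li_def sum.distrib scaleR_add_left scaleR_sum_right)

lemma bij_Lm: "bij Lm"
  by (metis Li_Lm Lm_Li bij_betw_byWitness subset_UNIV)

lemma Lm_inner_bvec: "Lm x $ i = x \<bullet> bvec i"
  by (simp add: Lm_def)

lemma Li_inner_bvec: "Li z \<bullet> bvec i = z $ i"
  by (metis Lm_Li Lm_inner_bvec)

lemma cont_Lm: "continuous_on A Lm"
  by (rule linear_continuous_on) (simp add: linear_Lm flip: linear_conv_bounded_linear)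
lemma cont_Li: "continuous_on A Li"
  by (rule linear_continuous_on) (simp add: linear_Li flip: linear_conv_bounded_linear)

lemma Lm_borel[measurable]: "Lm \<in> borel_measurable borel"
  using borel_measurable_continuous_onI cont_Lm by blast
lemma Li_borel[measurable]: "Li \<in> borel_measurable borel"
  using borel_measurable_continuous_onI cont_Li by blast

lemma ball_Basis_bidx: "(\<forall>b\<in>(Basis::'a::euclidean_space set). P b) \<longleftrightarrow> (\<forall>i. P (bvec i))"
  by (metis bvec_Basis imageE range_bvec)

lemma Basis_vec_range: "(Basis :: (real^'n) set) = range (\<lambda>i. axis i 1)"
  by (auto simp: Basis_vec_def)

lemma prod_Basis_cart: "(\<Prod>b\<in>(Basis :: (real^'n) set). G b) = (\<Prod>i\<in>UNIV. G (axis i 1))"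
proof -
  have "inj (\<lambda>i::'n. axis i (1::real))" by (rule injI) (simp add: axis_eq_axis)
  then show ?thesis
    using prod.reindex[of "\<lambda>i::'n. axis i (1::real)" UNIV G] by (simp add: Basis_vec_range)
qed

lemma vimage_Lm_box: "Lm -` box l u = box (Li l) (Li u)"
proof -
  have "x \<in> box (Li l) (Li u) \<longleftrightarrow> (\<forall>i. l$i < x \<bullet> bvec i \<and> x \<bullet> bvec i < u$i)" for x
    unfolding mem_box ball_Basis_bidx by (simp add: Li_inner_bvec)
  then show ?thesis by (auto simp: mem_box_cart Lm_inner_bvec)
qed

lemma prod_Basis_bidx: "(\<Prod>b\<in>(Basis::'a::euclidean_space set). G b) = (\<Prod>i\<in>UNIV. G (bvec i))"
  using prod.reindex[OF inj_on_subset[OF bvec_inj subset_UNIV], of G UNIV]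
  by (simp add: range_bvec)

lemma distr_lborel_Lm: "distr (lborel :: 'a::euclidean_space measure) borel Lm = lborel"
proof (rule lborel_eqI[symmetric])
  fix l u :: "real^('a bidx)"
  assume le: "\<And>b. b \<in> Basis \<Longrightarrow> l \<bullet> b \<le> u \<bullet> b"
  have le': "l $ i \<le> u $ i" for i
  proof -
    have "l \<bullet> axis i 1 \<le> u \<bullet> axis i 1" using le by (auto simp: Basis_vec_def)
    then show ?thesis by (simp add: cart_eq_inner_axis)
  qed
  have "emeasure (distr lborel borel Lm) (box l u) = emeasure lborel (box (Li l) (Li u) :: 'a set)"
    by (simp add: emeasure_distr vimage_Lm_box)
  also have "\<dots> = (\<Prod>b\<in>(Basis::'a set). (Li u - Li l) \<bullet> b)"
    using le' by (subst emeasure_lborel_box_eq) (auto simp: inner_diff_left range_bvec[symmetric] Li_inner_bvec)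
  also have "\<dots> = (\<Prod>i\<in>UNIV. (u - l) $ i)"
    by (simp add: prod_Basis_bidx inner_diff_left Li_inner_bvec)
  also have "\<dots> = (\<Prod>b\<in>Basis. (u - l) \<bullet> b)"
    by (simp add: prod_Basis_cart cart_eq_inner_axis)
  finally show "emeasure (distr lborel borel Lm) (box l u) = (\<Prod>b\<in>Basis. (u - l) \<bullet> b)" .
qed simp

lemma lebesgue_of_lborel_preserving:
  fixes T :: "'a::euclidean_space \<Rightarrow> 'b::euclidean_space"
  assumes Tb[measurable]: "T \<in> borel \<rightarrow>\<^sub>M borel"
    and D: "distr lborel borel T = lborel"
  shows "T \<in> lebesgue \<rightarrow>\<^sub>M lebesgue" "distr lebesgue lebesgue T = lebesgue"
proof -
  have Tl: "T \<in> lborel \<rightarrow>\<^sub>M lborel" using Tb by simp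
  { fix A :: "'b set" assume A: "A \<in> sets borel"
    have "emeasure lborel A = emeasure (distr lborel borel T) A" by (simp add: D)
    also have "\<dots> = emeasure (distr lebesgue lborel T) A"
      using A by (simp add: distr_completion cong: distr_cong)
    finally have "emeasure lborel A = emeasure (distr lebesgue lborel T) A" . }
  then have eq: "null_sets lborel = null_sets (distr lebesgue lborel T)"
    by (auto simp: null_sets_def)
  show T: "T \<in> lebesgue \<rightarrow>\<^sub>M lebesgue"
    by (simp add: completion.measurable_completion2 eq measurable_completion)
  have "lebesgue = completion (distr lborel borel T)" by (simp add: D)
  also have "\<dots> = completion (distr lebesgue lborel T)"
    by (simp add: distr_completion cong: distr_cong)
  also have "\<dots> = distr lebesgue lebesgue T"
    by (subst completion.completion_distr_eq) (auto simp: eq measurable_completion)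
  finally show "distr lebesgue lebesgue T = lebesgue" by simp
qed

lemma vimage_Li_box: "Li -` box l u = box (Lm l) (Lm u)"
proof -
  have "z \<in> box (Lm l) (Lm u) \<longleftrightarrow> (\<forall>i. l \<bullet> bvec i < z $ i \<and> z $ i < u \<bullet> bvec i)" for z
    by (simp add: mem_box_cart Lm_inner_bvec)
  then show ?thesis by (auto simp: mem_box ball_Basis_bidx Li_inner_bvec)
qed

lemma distr_lborel_Li: "distr (lborel :: (real^('a::euclidean_space bidx)) measure) borel Li = (lborel :: 'a measure)"
proof (rule lborel_eqI[symmetric])
  fix l u :: 'a
  assume le: "\<And>b. b \<in> Basis \<Longrightarrow> l \<bullet> b \<le> u \<bullet> b"
  have "emeasure (distr lborel borel Li) (box l u) = emeasure lborel (box (Lm l) (Lm u))"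
    by (simp add: emeasure_distr vimage_Li_box)
  also have "\<dots> = (\<Prod>b\<in>(Basis::(real^('a bidx)) set). (Lm u - Lm l) \<bullet> b)"
    using le bvec_Basis by (subst emeasure_lborel_box_eq) (auto simp: Basis_vec_range cart_eq_inner_axis[symmetric] Lm_inner_bvec)
  also have "\<dots> = (\<Prod>b\<in>Basis. (u - l) \<bullet> b)"
    by (simp add: prod_Basis_cart prod_Basis_bidx cart_eq_inner_axis[symmetric] Lm_inner_bvec inner_diff_left)
  finally show "emeasure (distr lborel borel Li) (box l u) = (\<Prod>b\<in>Basis. (u - l) \<bullet> b)" .
qed simp

lemmas Lm_leb = lebesgue_of_lborel_preserving[OF Lm_borel distr_lborel_Lm]
lemmas Li_leb = lebesgue_of_lborel_preserving[OF Li_borel distr_lborel_Li]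

lemma Lm_image_eq: "Lm ` A = Li -` A"
  by (auto simp: image_iff) (metis Lm_Li)

lemma Li_image_eq: "Li ` A = Lm -` A"
  by (auto simp: image_iff) (metis Li_Lm)

lemma sets_Lm_image: "A \<in> sets lebesgue \<Longrightarrow> Lm ` A \<in> sets lebesgue"
  unfolding Lm_image_eq using measurable_sets[OF Li_leb(1)] by simp

lemma sets_Li_image: "A \<in> sets lebesgue \<Longrightarrow> Li ` A \<in> sets lebesgue"
  unfolding Li_image_eq using measurable_sets[OF Lm_leb(1)] by simp

lemma integrable_Lm_transfer:
  fixes G :: "'a::euclidean_space \<Rightarrow> real"
  shows "integrable lebesgue (\<lambda>z. G (Li z)) \<longleftrightarrow> integrable lebesgue G"
proof
  assume "integrable lebesgue G"
  moreover have "G \<in> borel_measurable lebesgue" using calculation by auto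
  ultimately show "integrable lebesgue (\<lambda>z. G (Li z))"
    using integrable_distr_eq[OF Li_leb(1), of G] by (simp add: Li_leb(2))
next
  assume I: "integrable lebesgue (\<lambda>z. G (Li z))"
  then have "(\<lambda>z. G (Li z)) \<in> borel_measurable lebesgue" by auto
  with I show "integrable lebesgue G"
    using integrable_distr_eq[OF Lm_leb(1), of "\<lambda>z. G (Li z)"] by (simp add: Lm_leb(2))
qed

lemma integral_Lm_transfer:
  fixes G :: "'a::euclidean_space \<Rightarrow> real"
  shows "integral\<^sup>L lebesgue (\<lambda>z. G (Li z)) = integral\<^sup>L lebesgue G"
proof (cases "integrable lebesgue G")
  case True
  then have "G \<in> borel_measurable lebesgue" by auto
  then show ?thesis using integral_distr[OF Li_leb(1), of G] by (simp add: Li_leb(2))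
next
  case False
  then show ?thesis using integrable_Lm_transfer[of G] by (simp add: not_integrable_integral_eq)
qed

lemma indicator_Lm_image: "indicator (Lm ` A) (z::real^('a::euclidean_space bidx)) = (indicator A (Li z) :: real)"
  by (simp add: Lm_image_eq indicator_def)

lemma absint_Lm_transfer:
  fixes G :: "'a::euclidean_space \<Rightarrow> real"
  shows "(\<lambda>z. G (Li z)) absolutely_integrable_on (Lm ` A) \<longleftrightarrow> G absolutely_integrable_on A"
  unfolding set_integrable_def indicator_Lm_image
  using integrable_Lm_transfer[of "\<lambda>x. indicator A x *\<^sub>R G x"] by simp

lemma absint_Lm_transfer_integral:
  fixes G :: "'a::euclidean_space \<Rightarrow> real"
  assumes True: "G absolutely_integrable_on A"
  shows "integral (Lm ` A) (\<lambda>z. G (Li z)) = integral A G"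
proof -
  have "integral A G = (LINT x:A|lebesgue. G x)" using True by (simp add: set_lebesgue_integral_eq_integral)
  moreover have "integral (Lm ` A) (\<lambda>z. G (Li z)) = (LINT z:(Lm ` A)|lebesgue. G (Li z))"
    using True absint_Lm_transfer[where G=G and A=A] by (simp add: set_lebesgue_integral_eq_integral)
  ultimately show ?thesis
    unfolding set_lebesgue_integral_def indicator_Lm_image
    using integral_Lm_transfer[of "\<lambda>x. indicator A x *\<^sub>R G x"] by simp
qed

definition jac :: "('a::euclidean_space \<Rightarrow> 'a) \<Rightarrow> real" where
  "jac A = \<bar>det (matrix (\<lambda>z. Lm (A (Li z))))\<bar>"

lemma cov_generic:
  fixes g :: "'a::euclidean_space \<Rightarrow> 'a" and F :: "'a \<Rightarrow> real"
  assumes S: "S \<in> sets lebesgue"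
    and der: "\<And>x. x \<in> S \<Longrightarrow> (g has_derivative g' x) (at x within S)"
    and inj: "inj_on g S"
  shows "(\<lambda>x. jac (g' x) * F (g x)) absolutely_integrable_on S \<and> integral S (\<lambda>x. jac (g' x) * F (g x)) = b
     \<longleftrightarrow> F absolutely_integrable_on (g ` S) \<and> integral (g ` S) F = b"
proof -
  define S' where "S' = Lm ` S"
  define gt where "gt = (\<lambda>z. Lm (g (Li z)))"
  define gt' where "gt' = (\<lambda>z w. Lm (g' (Li z) (Li w)))"
  define Ft where "Ft = (\<lambda>z. vec (F (Li z)) :: real^1)"
  have S': "S' \<in> sets lebesgue" unfolding S'_def by (rule sets_Lm_image[OF S])
  have LiS': "Li ` S' = S" unfolding S'_def by (force simp: image_iff)
  have dert: "(gt has_derivative gt' z) (at z within S')" if z: "z \<in> S'" for z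
  proof -
    have d1: "(Li has_derivative Li) (at z within S')"
      by (simp add: bounded_linear_imp_has_derivative linear_Li flip: linear_conv_bounded_linear)
    have d2: "(g has_derivative g' (Li z)) (at (Li z) within Li ` S')"
      using der z LiS' by auto
    have "((g \<circ> Li) has_derivative (g' (Li z) \<circ> Li)) (at z within S')"
      by (rule diff_chain_within[OF d1 d2])
    then have "((\<lambda>z. Lm ((g \<circ> Li) z)) has_derivative (\<lambda>w. Lm ((g' (Li z) \<circ> Li) w))) (at z within S')"
      by (rule bounded_linear.has_derivative[rotated]) (simp add: linear_Lm flip: linear_conv_bounded_linear)
    then show ?thesis by (simp add: gt_def gt'_def o_def)
  qed
  have injt: "inj_on gt S'"
    using inj unfolding gt_def S'_def inj_on_def by (auto) (metis Li_Lm)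
  have gtS: "gt ` S' = Lm ` (g ` S)"
    unfolding gt_def S'_def by (force simp: image_iff)
  note CV = has_absolute_integral_change_of_variables[OF S' dert injt, of Ft "vec b"]
  define H where "H = (\<lambda>x. jac (g' x) * F (g x))"
  have lhs: "(\<lambda>z. \<bar>det (matrix (gt' z))\<bar> *\<^sub>R Ft (gt z)) = (\<lambda>z. vec (H (Li z)))"
    by (simp add: gt_def gt'_def Ft_def jac_def H_def fun_eq_iff vec_eq_iff)
  have gen1: "(\<lambda>z. vec (G (Li z)) :: real^1) absolutely_integrable_on (Lm ` A) \<longleftrightarrow> G absolutely_integrable_on A"
    for G :: "'a \<Rightarrow> real" and A
    using absint_Lm_transfer[where G=G and A=A] by (simp add: absolutely_integrable_on_1_iff)
  have gen2: "integral (Lm ` A) (\<lambda>z. vec (G (Li z)) :: real^1) = vec (integral A G)"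
    if "G absolutely_integrable_on A" for G :: "'a \<Rightarrow> real" and A
    using absint_Lm_transfer_integral[OF that] by (simp add: integral_on_1_eq)
  have "H absolutely_integrable_on S \<and> integral S H = b \<longleftrightarrow>
        (\<lambda>z. vec (H (Li z)) :: real^1) absolutely_integrable_on S' \<and> integral S' (\<lambda>z. vec (H (Li z)) :: real^1) = vec b"
    unfolding S'_def using gen1[where G=H and A=S] gen2[where G=H and A=S] by auto
  also have "\<dots> \<longleftrightarrow> Ft absolutely_integrable_on (gt ` S') \<and> integral (gt ` S') Ft = vec b"
    using CV unfolding lhs .
  also have "\<dots> \<longleftrightarrow> F absolutely_integrable_on (g ` S) \<and> integral (g ` S) F = b"
    unfolding gtS Ft_def using gen1[where G=F and A="g ` S"] gen2[where G=F and A="g ` S"] by auto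
  finally show ?thesis unfolding H_def .
qed

lemma Li_axis: "Li (axis j 1) = bvec j"
proof -
  have "(\<lambda>i. (axis j (1::real) $ i) *\<^sub>R bvec i) = (\<lambda>i. if i = j then bvec i else 0)"
    by (auto simp: axis_def fun_eq_iff)
  then show ?thesis unfolding Li_def by (simp only:) simp
qed

lemma jac_eq: "jac A = \<bar>\<Sum>p\<in>{p. p permutes (UNIV :: 'a::euclidean_space bidx set)}.
   of_int (sign p) * (\<Prod>i\<in>UNIV. A (bvec (p i)) \<bullet> bvec i)\<bar>"
  by (simp add: jac_def det_def matrix_def Li_axis Lm_inner_bvec)

lemma continuous_on_jac:
  fixes A :: "'b::topological_space \<Rightarrow> 'a::euclidean_space \<Rightarrow> 'a"
  assumes "\<And>b. b \<in> Basis \<Longrightarrow> continuous_on S (\<lambda>y. A y b)"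
  shows "continuous_on S (\<lambda>y. jac (A y))"
  unfolding jac_eq
  by (intro continuous_intros assms bvec_Basis)

lemma smooth_on_differentiable: "smooth_on S f \<Longrightarrow> x \<in> S \<Longrightarrow> f differentiable (at x)"
  by (erule smooth_on.cases) auto

lemma smooth_on_partial: "smooth_on S f \<Longrightarrow> i \<in> Basis \<Longrightarrow> smooth_on S (\<lambda>x. frechet_derivative f (at x) i)"
  by (erule smooth_on.cases) auto

lemma smooth_on_cont: "smooth_on S f \<Longrightarrow> continuous_on S f"
  by (meson continuous_at_imp_continuous_on differentiable_imp_continuous_within smooth_on_differentiable)

lemma smooth_on_hasderiv: "smooth_on S f \<Longrightarrow> x \<in> S \<Longrightarrow> (f has_derivative frechet_derivative f (at x)) (at x)"
  using frechet_derivative_works smooth_on_differentiable by blast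

lemma smooth_deriv_expand:
  assumes "smooth_on S f" "x \<in> S"
  shows "frechet_derivative f (at x) w = (\<Sum>b\<in>Basis. (w \<bullet> b) *\<^sub>R frechet_derivative f (at x) b)"
proof -
  have "linear (frechet_derivative f (at x))"
    using smooth_on_hasderiv[OF assms] has_derivative_linear by blast
  then have "frechet_derivative f (at x) (\<Sum>b\<in>Basis. (w \<bullet> b) *\<^sub>R b) = (\<Sum>b\<in>Basis. (w \<bullet> b) *\<^sub>R frechet_derivative f (at x) b)"
    by (simp add: linear_sum linear_scale)
  then show ?thesis by (simp add: euclidean_representation)
qed

lemma smooth_deriv_cont_comp:
  fixes f :: "'a::euclidean_space \<Rightarrow> 'b::real_normed_vector"
  assumes f: "smooth_on U f" and a: "continuous_on S a" and aU: "a ` S \<subseteq> U" and c: "continuous_on S c"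
  shows "continuous_on S (\<lambda>p. frechet_derivative f (at (a p)) (c p))"
proof -
  have "continuous_on S (\<lambda>p. \<Sum>b\<in>Basis. (c p \<bullet> b) *\<^sub>R frechet_derivative f (at (a p)) b)"
  proof (intro continuous_intros c)
    fix b :: 'a assume b: "b \<in> Basis"
    have "continuous_on U (\<lambda>x. frechet_derivative f (at x) b)"
      using smooth_on_cont[OF smooth_on_partial[OF f b]] .
    then show "continuous_on S (\<lambda>p. frechet_derivative f (at (a p)) b)"
      using continuous_on_compose2[OF _ a aU] by blast
  qed
  then show ?thesis
    by (rule continuous_on_cong[THEN iffD1, rotated 2]) (use aU smooth_deriv_expand[OF f] in auto)
qed

definition BL :: "nat \<Rightarrow> 'a::euclidean_space list set" where
  "BL k = {bs. set bs \<subseteq> Basis \<and> length bs = k}"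

lemma finite_BL: "finite (BL k)"
  unfolding BL_def by (rule finite_lists_length_eq) simp

lemma form_norm_BL: "form_norm k \<alpha> = sqrt ((\<Sum>bs\<in>BL k. (\<alpha> bs)\<^sup>2) / fact k)"
  by (simp add: form_norm_def BL_def)

lemma form_norm_nonneg: "form_norm k \<alpha> \<ge> 0"
  unfolding form_norm_def by (intro real_sqrt_ge_zero divide_nonneg_nonneg sum_nonneg) auto

lemma kcov_le_form_norm:
  assumes "bs \<in> BL k"
  shows "\<bar>\<alpha> bs\<bar> \<le> sqrt (fact k) * form_norm k \<alpha>"
proof -
  have "(\<alpha> bs)\<^sup>2 \<le> (\<Sum>bs\<in>BL k. (\<alpha> bs)\<^sup>2)"
    using assms finite_BL by (intro member_le_sum) auto
  then have "sqrt ((\<alpha> bs)\<^sup>2) \<le> sqrt (\<Sum>bs\<in>BL k. (\<alpha> bs)\<^sup>2)" by (rule real_sqrt_le_mono)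
  moreover have "sqrt (fact k) * form_norm k \<alpha> = sqrt (\<Sum>bs\<in>BL k. (\<alpha> bs)\<^sup>2)"
    by (simp add: form_norm_BL real_sqrt_divide)
  ultimately show ?thesis by (metis real_sqrt_abs)
qed

lemma sum_sq_le_sq_sum:
  fixes a :: "'b \<Rightarrow> real"
  assumes "finite A" "\<And>x. x \<in> A \<Longrightarrow> a x \<ge> 0"
  shows "(\<Sum>x\<in>A. (a x)\<^sup>2) \<le> (\<Sum>x\<in>A. a x)\<^sup>2"
  using assms
proof (induction A rule: finite_induct)
  case (insert x F)
  have "0 \<le> (\<Sum>x\<in>F. a x)" using insert by (intro sum_nonneg) auto
  moreover have "a x \<ge> 0" using insert by auto
  ultimately have "0 \<le> 2 * a x * (\<Sum>x\<in>F. a x)" by simp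
  then show ?case using insert by (simp add: power2_sum)
qed simp

lemma form_norm_le_sum: "form_norm k \<alpha> \<le> (\<Sum>bs\<in>BL k. \<bar>\<alpha> bs\<bar>)"
proof -
  have fk: "(1::real) \<le> fact k" by simp
  have "(\<Sum>bs\<in>BL k. (\<alpha> bs)\<^sup>2) / fact k \<le> (\<Sum>bs\<in>BL k. (\<alpha> bs)\<^sup>2)"
  proof -
    have S0: "0 \<le> (\<Sum>bs\<in>BL k. (\<alpha> bs)\<^sup>2)" by (simp add: sum_nonneg)
    show ?thesis using S0 fk divide_left_mono[of 1 "fact k" "(\<Sum>bs\<in>BL k. (\<alpha> bs)\<^sup>2)"] by simp
  qed
  also have "\<dots> \<le> (\<Sum>bs\<in>BL k. \<bar>\<alpha> bs\<bar>)\<^sup>2"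
  proof -
    have "(\<Sum>bs\<in>BL k. \<bar>\<alpha> bs\<bar>^2) \<le> (\<Sum>bs\<in>BL k. \<bar>\<alpha> bs\<bar>)\<^sup>2"
      by (rule sum_sq_le_sq_sum) (auto simp: finite_BL)
    then show ?thesis by simp
  qed
  finally show ?thesis
    unfolding form_norm_BL by (meson real_le_lsqrt sum_nonneg abs_ge_zero)
qed

lemma BL_0: "BL 0 = {[]}"
  by (auto simp: BL_def)

lemma BL_Suc: "BL (Suc j) = (\<lambda>(bs,b). bs @ [b]) ` (BL j \<times> Basis)"
proof
  show "(\<lambda>(bs,b). bs @ [b]) ` (BL j \<times> Basis) \<subseteq> BL (Suc j)" by (auto simp: BL_def)
  show "BL (Suc j) \<subseteq> (\<lambda>(bs,b). bs @ [b]) ` (BL j \<times> Basis)"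
  proof
    fix bs' assume "bs' \<in> BL (Suc j)"
    then have b: "set bs' \<subseteq> Basis" "length bs' = Suc j" by (auto simp: BL_def)
    then have "bs' \<noteq> []" by auto
    then have eq: "bs' = butlast bs' @ [last bs']" by simp
    have "butlast bs' \<in> BL j" using b by (auto simp: BL_def dest: in_set_butlastD)
    moreover have "last bs' \<in> Basis" using b \<open>bs' \<noteq> []\<close> by auto
    ultimately show "bs' \<in> (\<lambda>(bs,b). bs @ [b]) ` (BL j \<times> Basis)"
      using eq by (auto intro!: image_eqI[where x="(butlast bs', last bs')"])
  qed
qed

lemma sum_BL_Suc:
  fixes G :: "'a::euclidean_space list \<Rightarrow> 'b::comm_monoid_add"
  shows "(\<Sum>bs'\<in>BL (Suc j). G bs') = (\<Sum>bs\<in>BL j. \<Sum>b\<in>Basis. G (bs @ [b]))"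
proof -
  have inj: "inj_on (\<lambda>(bs,b). bs @ [b]) (BL j \<times> (Basis::'a set))"
    by (auto simp: inj_on_def)
  have "(\<Sum>bs'\<in>BL (Suc j). G bs') = (\<Sum>p\<in>BL j \<times> Basis. G ((\<lambda>(bs,b). bs @ [b]) p))"
    unfolding BL_Suc by (rule sum.reindex[OF inj, unfolded o_def])
  also have "\<dots> = (\<Sum>bs\<in>BL j. \<Sum>b\<in>Basis. G (bs @ [b]))"
    by (simp add: sum.cartesian_product case_prod_beta)
  finally show ?thesis .
qed

lemma kcov_slot_expand:
  assumes "kcovector k \<alpha>" "length vs = k" "j < k"
  shows "\<alpha> vs = (\<Sum>b\<in>Basis. (vs!j \<bullet> b) * \<alpha> (vs[j := b]))"
proof -
  have lin: "linear (\<lambda>v. \<alpha> (vs[j := v]))" using assms unfolding kcovector_def by blast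
  have "\<alpha> vs = \<alpha> (vs[j := (\<Sum>b\<in>Basis. (vs!j \<bullet> b) *\<^sub>R b)])"
    by (simp add: euclidean_representation)
  also have "\<dots> = (\<Sum>b\<in>Basis. (vs!j \<bullet> b) * \<alpha> (vs[j := b]))"
    using linear_sum[OF lin, of "\<lambda>b. (vs!j \<bullet> b) *\<^sub>R b" Basis] linear_scale[OF lin] by simp
  finally show ?thesis .
qed

lemma kcov_expand_aux:
  fixes \<alpha> :: "'a::euclidean_space list \<Rightarrow> real"
  assumes K: "kcovector k \<alpha>" and L: "length ws = k"
  shows "j \<le> k \<Longrightarrow> \<alpha> ws = (\<Sum>bs\<in>BL j. (\<Prod>i<j. ws!i \<bullet> bs!i) * \<alpha> (bs @ drop j ws))"
proof (induction j)
  case 0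
  then show ?case by (simp add: BL_0)
next
  case (Suc j)
  then have j: "j < k" by simp
  have step: "\<alpha> (bs @ drop j ws) = (\<Sum>b\<in>Basis. (ws!j \<bullet> b) * \<alpha> ((bs @ [b]) @ drop (Suc j) ws))"
    if bs: "bs \<in> BL j" for bs
  proof -
    have lb: "length bs = j" using bs by (simp add: BL_def)
    have len: "length (bs @ drop j ws) = k" using lb L j by simp
    have nth: "(bs @ drop j ws) ! j = ws ! j" using lb L j by (simp add: nth_append)
    have upd: "(bs @ drop j ws)[j := b] = (bs @ [b]) @ drop (Suc j) ws" for b
    proof -
      have "drop j ws = ws ! j # drop (Suc j) ws" using L j by (simp add: Cons_nth_drop_Suc)
      then show ?thesis using lb by (simp add: list_update_append)
    qed
    show ?thesis using kcov_slot_expand[OF K len, of j] j by (simp add: nth upd)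
  qed
  have "\<alpha> ws = (\<Sum>bs\<in>BL j. (\<Prod>i<j. ws!i \<bullet> bs!i) * \<alpha> (bs @ drop j ws))"
    using Suc by simp
  also have "\<dots> = (\<Sum>bs\<in>BL j. \<Sum>b\<in>Basis. (\<Prod>i<j. ws!i \<bullet> bs!i) * (ws!j \<bullet> b) * \<alpha> ((bs @ [b]) @ drop (Suc j) ws))"
    by (rule sum.cong[OF refl]) (simp add: step sum_distrib_left mult.assoc)
  also have "\<dots> = (\<Sum>bs\<in>BL j. \<Sum>b\<in>Basis. (\<Prod>i<Suc j. ws!i \<bullet> (bs @ [b])!i) * \<alpha> ((bs @ [b]) @ drop (Suc j) ws))"
  proof (intro sum.cong refl)
    fix bs :: "'a list" and b :: 'a assume bs: "bs \<in> BL j"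
    then have lb: "length bs = j" by (simp add: BL_def)
    have "(\<Prod>i<Suc j. ws!i \<bullet> (bs @ [b])!i) = (\<Prod>i<j. ws!i \<bullet> (bs @ [b])!i) * (ws!j \<bullet> b)"
      using lb by (simp add: nth_append)
    also have "(\<Prod>i<j. ws!i \<bullet> (bs @ [b])!i) = (\<Prod>i<j. ws!i \<bullet> bs!i)"
      using lb by (intro prod.cong) (auto simp: nth_append)
    finally show "(\<Prod>i<j. ws!i \<bullet> bs!i) * (ws!j \<bullet> b) * \<alpha> ((bs @ [b]) @ drop (Suc j) ws) =
        (\<Prod>i<Suc j. ws!i \<bullet> (bs @ [b])!i) * \<alpha> ((bs @ [b]) @ drop (Suc j) ws)" by simp
  qed
  also have "\<dots> = (\<Sum>bs\<in>BL (Suc j). (\<Prod>i<Suc j. ws!i \<bullet> bs!i) * \<alpha> (bs @ drop (Suc j) ws))"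
    by (rule sum_BL_Suc[symmetric])
  finally show ?case .
qed

lemma kcov_expand:
  assumes "kcovector k \<alpha>" "length ws = k"
  shows "\<alpha> ws = (\<Sum>bs\<in>BL k. (\<Prod>i<k. ws!i \<bullet> bs!i) * \<alpha> bs)"
  using kcov_expand_aux[OF assms, of k] assms(2) by simp

lemma cv_apply:
  fixes h :: "'a::euclidean_space \<Rightarrow> 'a" and u C f :: "'a \<Rightarrow> real" and Di :: "'a \<Rightarrow> 'a \<Rightarrow> 'a"
  assumes eps: "\<epsilon> > 0"
    and hinv: "\<And>y. y \<in> ball 0 1 \<Longrightarrow> h (inv h y) = y"
    and Di: "\<And>y. y \<in> ball 0 1 \<Longrightarrow> (inv h has_derivative Di y) (at y)"
    and hinj: "inj_on (inv h) (ball 0 1)"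
    and K: "compact K" "K \<subseteq> ball 0 1"
    and aK: "\<And>v. v \<in> cball 0 1 \<Longrightarrow> h (a + \<epsilon> *\<^sub>R v) \<in> K"
    and hh: "\<And>z. inv h (h z) = z"
    and Ccont: "continuous_on UNIV C" and fcont: "continuous_on UNIV f"
    and f0: "\<And>v. v \<notin> cball 0 1 \<Longrightarrow> f v = 0"
    and invcont: "continuous_on (ball 0 1) (inv h)"
    and Jcont: "continuous_on K (\<lambda>y. jac (\<lambda>w. (1/\<epsilon>) *\<^sub>R Di y w))"
    and u: "u absolutely_integrable_on K"
  shows "integrable lebesgue (\<lambda>v. C v * u (h (a + \<epsilon> *\<^sub>R v)) * f v)"
    and "(LINT v|lebesgue. C v * u (h (a + \<epsilon> *\<^sub>R v)) * f v) =
         integral K (\<lambda>y. (jac (\<lambda>w. (1/\<epsilon>) *\<^sub>R Di y w) * C ((1/\<epsilon>) *\<^sub>R (inv h y - a)) * f ((1/\<epsilon>) *\<^sub>R (inv h y - a))) * u y)"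
proof -
  define \<psi> where "\<psi> y = (1/\<epsilon>) *\<^sub>R (inv h y - a)" for y
  define \<psi>' where "\<psi>' y = (\<lambda>w. (1/\<epsilon>) *\<^sub>R Di y w)" for y
  define G where "G v = C v * u (h (a + \<epsilon> *\<^sub>R v)) * f v" for v
  define W where "W y = jac (\<psi>' y) * C (\<psi> y) * f (\<psi> y)" for y
  have Kleb: "K \<in> sets lebesgue" using lmeasurable_compact[OF K(1)] by (simp add: fmeasurableD)
  have der: "(\<psi> has_derivative \<psi>' y) (at y within K)" if "y \<in> K" for y
  proof -
    have "(inv h has_derivative Di y) (at y)" using Di that K by auto
    then have "((\<lambda>y. (1/\<epsilon>) *\<^sub>R (inv h y - a)) has_derivative (\<lambda>w. (1/\<epsilon>) *\<^sub>R (Di y w - 0))) (at y)"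
      by (intro derivative_intros) auto
    then show ?thesis unfolding \<psi>_def \<psi>'_def by (simp add: has_derivative_at_withinI)
  qed
  have inj: "inj_on \<psi> K"
  proof (rule inj_onI)
    fix x y assume xy: "x \<in> K" "y \<in> K" "\<psi> x = \<psi> y"
    then have "inv h x = inv h y" using eps by (simp add: \<psi>_def)
    then show "x = y" using hinj xy K by (auto dest: inj_onD)
  qed
  have psicont: "continuous_on K \<psi>"
    unfolding \<psi>_def by (intro continuous_intros continuous_on_subset[OF invcont K(2)])
  have Wcont: "continuous_on K W"
    unfolding W_def \<psi>'_def
    by (intro continuous_intros Jcont continuous_on_compose2[OF Ccont psicont] continuous_on_compose2[OF fcont psicont]) auto
  have Wbdd: "bounded (W ` K)" by (rule compact_imp_bounded[OF compact_continuous_image[OF Wcont K(1)]])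
  have Wmeas: "W \<in> borel_measurable (lebesgue_on K)" by (rule continuous_imp_measurable_on_sets_lebesgue[OF Wcont Kleb])
  have prodint: "(\<lambda>y. W y * u y) absolutely_integrable_on K"
    using absolutely_integrable_bounded_measurable_product[OF bilinear_times Wmeas Kleb Wbdd u] .
  have eqK: "jac (\<psi>' y) * G (\<psi> y) = W y * u y" if "y \<in> K" for y
  proof -
    have "a + \<epsilon> *\<^sub>R \<psi> y = inv h y" using eps by (simp add: \<psi>_def)
    then have "h (a + \<epsilon> *\<^sub>R \<psi> y) = y" using hinv that K by auto
    then show ?thesis by (simp add: G_def W_def)
  qed
  have lhs: "(\<lambda>y. jac (\<psi>' y) * G (\<psi> y)) absolutely_integrable_on K"
    using prodint set_integrable_cong[OF refl refl, of K "\<lambda>y. jac (\<psi>' y) * G (\<psi> y)" "\<lambda>y. W y * u y"] eqK by simp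
  have lhsI: "integral K (\<lambda>y. jac (\<psi>' y) * G (\<psi> y)) = integral K (\<lambda>y. W y * u y)"
    using eqK by (rule integral_cong)
  from cov_generic[OF Kleb der inj, of G "integral K (\<lambda>y. jac (\<psi>' y) * G (\<psi> y))"] lhs
  have Gint: "G absolutely_integrable_on (\<psi> ` K)" and GI: "integral (\<psi> ` K) G = integral K (\<lambda>y. jac (\<psi>' y) * G (\<psi> y))"
    by auto
  have ball_sub: "cball 0 1 \<subseteq> \<psi> ` K"
  proof
    fix v :: 'a assume v: "v \<in> cball 0 1"
    have "\<psi> (h (a + \<epsilon> *\<^sub>R v)) = v" using eps by (simp add: \<psi>_def hh)
    then show "v \<in> \<psi> ` K" using aK[OF v] by force
  qed
  have Gz: "indicator (\<psi> ` K) v *\<^sub>R G v = G v" for v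
  proof (cases "v \<in> \<psi> ` K")
    case False
    then have "v \<notin> cball 0 1" using ball_sub by blast
    then show ?thesis using False f0[of v] by (simp add: G_def)
  qed simp
  have GL: "integrable lebesgue G"
    using Gint unfolding set_integrable_def Gz .
  then show "integrable lebesgue (\<lambda>v. C v * u (h (a + \<epsilon> *\<^sub>R v)) * f v)" by (simp add: G_def[abs_def])
  have "(LINT v|lebesgue. G v) = (LINT v:(\<psi> ` K)|lebesgue. G v)"
    unfolding set_lebesgue_integral_def Gz ..
  also have "\<dots> = integral (\<psi> ` K) G"
    using Gint by (simp add: set_lebesgue_integral_eq_integral)
  also have "\<dots> = integral K (\<lambda>y. W y * u y)" using GI lhsI by simp
  finally show "(LINT v|lebesgue. C v * u (h (a + \<epsilon> *\<^sub>R v)) * f v) =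
         integral K (\<lambda>y. (jac (\<lambda>w. (1/\<epsilon>) *\<^sub>R Di y w) * C ((1/\<epsilon>) *\<^sub>R (inv h y - a)) * f ((1/\<epsilon>) *\<^sub>R (inv h y - a))) * u y)"
    by (simp add: G_def[abs_def] W_def \<psi>_def \<psi>'_def)
qed

lemma young_simple:
  fixes t x p :: real
  assumes t: "t > 0" and x: "x \<ge> 0" and p: "p \<ge> 1"
  shows "x \<le> t + t powr (1 - p) * x powr p"
proof (cases "x \<le> t")
  case True
  then show ?thesis by (simp add: add_increasing2)
next
  case False
  then have xt: "x > t" by simp
  then have x0: "x > 0" using t by simp
  have "t powr (1 - p) * x powr p = x * (x / t) powr (p - 1)"
  proof -
    have "x powr p = x * x powr (p - 1)" using x0 by (simp add: powr_diff)
    moreover have "t powr (1 - p) = 1 / t powr (p - 1)" using t by (simp add: powr_diff powr_minus_divide)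
    moreover have "(x / t) powr (p - 1) = x powr (p - 1) / t powr (p - 1)" using x0 t by (simp add: powr_divide)
    ultimately show ?thesis by simp
  qed
  moreover have "(x / t) powr (p - 1) \<ge> 1" using xt t p by (intro ge_one_powr_ge_zero) auto
  ultimately have "t powr (1 - p) * x powr p \<ge> x" using x0
    by (metis mult.right_neutral mult_left_mono less_imp_le)
  then show ?thesis using t by simp
qed

lemma param_cont:
  fixes Kern :: "'a::euclidean_space \<Rightarrow> 'b::euclidean_space \<Rightarrow> real" and u :: "'b \<Rightarrow> real"
  assumes F: "compact F" and K: "compact K"
    and cont: "continuous_on (F \<times> K) (\<lambda>p. Kern (fst p) (snd p))"
    and u: "u absolutely_integrable_on K"
  shows "continuous_on F (\<lambda>x. integral K (\<lambda>y. Kern x y * u y))"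
    and "\<And>x. x \<in> F \<Longrightarrow> (\<lambda>y. Kern x y * u y) absolutely_integrable_on K"
proof -
  have Kleb: "K \<in> sets lebesgue" using lmeasurable_compact[OF K] by (simp add: fmeasurableD)
  have int: "(\<lambda>y. Kern x y * u y) absolutely_integrable_on K" if x: "x \<in> F" for x
  proof -
    have c1: "continuous_on K (\<lambda>y. (x, y))" by (intro continuous_intros)
    have c2: "(\<lambda>y. (x, y)) ` K \<subseteq> F \<times> K" using x by auto
    have c: "continuous_on K (\<lambda>y. Kern x y)"
      using continuous_on_compose2[OF cont c1 c2] by simp
    show ?thesis
      by (rule absolutely_integrable_bounded_measurable_product[OF bilinear_times
            continuous_imp_measurable_on_sets_lebesgue[OF c Kleb] Kleb
            compact_imp_bounded[OF compact_continuous_image[OF c K]] u])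
  qed
  then show "\<And>x. x \<in> F \<Longrightarrow> (\<lambda>y. Kern x y * u y) absolutely_integrable_on K" .
  have uc: "uniformly_continuous_on (F \<times> K) (\<lambda>p. Kern (fst p) (snd p))"
    by (rule compact_uniformly_continuous[OF cont compact_Times[OF F K]])
  have uabs: "(\<lambda>y. \<bar>u y\<bar>) absolutely_integrable_on K"
    using u by (simp add: absolutely_integrable_abs_iff set_integrable_abs)
  define N where "N = integral K (\<lambda>y. \<bar>u y\<bar>)"
  have N0: "N \<ge> 0" unfolding N_def by (rule integral_nonneg) (use uabs set_lebesgue_integral_eq_integral in auto)
  show "continuous_on F (\<lambda>x. integral K (\<lambda>y. Kern x y * u y))"
    unfolding continuous_on_iff
  proof (intro ballI allI impI)
    fix x e assume x: "x \<in> F" and e: "(0::real) < e"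
    define e' where "e' = e / (N + 1)"
    have e': "e' > 0" using e N0 by (simp add: e'_def)
    obtain d where d: "d > 0" and dd: "\<And>p p'. p \<in> F \<times> K \<Longrightarrow> p' \<in> F \<times> K \<Longrightarrow> dist p' p < d \<Longrightarrow>
        dist (Kern (fst p') (snd p')) (Kern (fst p) (snd p)) < e'"
      using uc e' unfolding uniformly_continuous_on_def by metis
    show "\<exists>d>0. \<forall>x'\<in>F. dist x' x < d \<longrightarrow> dist (integral K (\<lambda>y. Kern x' y * u y)) (integral K (\<lambda>y. Kern x y * u y)) < e"
    proof (intro exI[of _ d] conjI ballI impI d)
      fix x' assume x': "x' \<in> F" and dx: "dist x' x < d"
      have pt: "\<bar>Kern x' y - Kern x y\<bar> \<le> e'" if y: "y \<in> K" for y
      proof -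
        have "dist (x', y) (x, y) < d" using dx by (simp add: dist_Pair_Pair)
        then have "dist (Kern x' y) (Kern x y) < e'" using dd[of "(x, y)" "(x', y)"] x x' y by auto
        then show ?thesis by (simp add: dist_real_def)
      qed
      have i1: "(\<lambda>y. Kern x' y * u y - Kern x y * u y) integrable_on K"
        using int[OF x] int[OF x'] by (intro integrable_diff) (auto simp: set_lebesgue_integral_eq_integral)
      have i2: "(\<lambda>y. e' * \<bar>u y\<bar>) integrable_on K"
        using integrable_cmul[OF set_lebesgue_integral_eq_integral(1)[OF uabs], of e'] by simp
      have "dist (integral K (\<lambda>y. Kern x' y * u y)) (integral K (\<lambda>y. Kern x y * u y))
          = norm (integral K (\<lambda>y. Kern x' y * u y - Kern x y * u y))"
        using int[OF x] int[OF x'] by (subst integral_diff) (auto simp: dist_norm set_lebesgue_integral_eq_integral)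
      also have "\<dots> \<le> integral K (\<lambda>y. e' * \<bar>u y\<bar>)"
      proof (rule integral_norm_bound_integral[OF i1 i2])
        fix y assume y: "y \<in> K"
        have "norm (Kern x' y * u y - Kern x y * u y) = \<bar>Kern x' y - Kern x y\<bar> * \<bar>u y\<bar>"
          by (simp add: abs_mult left_diff_distrib[symmetric])
        also have "\<dots> \<le> e' * \<bar>u y\<bar>" using pt[OF y] by (simp add: mult_right_mono)
        finally show "norm (Kern x' y * u y - Kern x y * u y) \<le> e' * \<bar>u y\<bar>" .
      qed
      also have "\<dots> = e' * N" by (simp add: N_def)
      also have "\<dots> < e" using e N0 by (simp add: e'_def field_simps)
      finally show "dist (integral K (\<lambda>y. Kern x' y * u y)) (integral K (\<lambda>y. Kern x y * u y)) < e" .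
    qed
  qed
qed

lemma Lp_L1:
  fixes \<phi> :: "'a::euclidean_space \<Rightarrow> real"
  assumes p: "p \<ge> 1" and U: "U \<in> sets lebesgue" and KU: "K \<subseteq> U" and Kl: "K \<in> lmeasurable"
    and \<phi>0: "\<And>x. \<phi> x \<ge> 0" and \<phi>m: "\<phi> \<in> borel_measurable (lebesgue_on U)"
    and fin: "set_nn_integral lebesgue U (\<lambda>x. ennreal (\<phi> x powr p)) < \<infinity>"
  shows "\<phi> absolutely_integrable_on K"
    and "integral K \<phi> \<le> (measure lebesgue K + 1) * enn2real (set_nn_integral lebesgue U (\<lambda>x. ennreal (\<phi> x powr p))) powr (1/p)"
proof -
  define P where "P x = \<phi> x powr p" for x
  have Kleb: "K \<in> sets lebesgue" using Kl by (simp add: fmeasurableD)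
  have Pm: "P \<in> borel_measurable (lebesgue_on U)"
    unfolding P_def[abs_def] using \<phi>m by measurable
  have P0: "P x \<ge> 0" for x by (simp add: P_def)
  have eqi: "(\<lambda>x. indicator U x *\<^sub>R P x) = (\<lambda>x. if x \<in> U then P x else 0)"
    by (auto simp: indicator_def)
  have Pm': "(\<lambda>x. indicator U x *\<^sub>R P x) \<in> borel_measurable lebesgue"
    unfolding eqi using borel_measurable_if[OF U] Pm by blast
  have nneq: "(\<integral>\<^sup>+x. ennreal (indicator U x *\<^sub>R P x) \<partial>lebesgue) = set_nn_integral lebesgue U (\<lambda>x. ennreal (\<phi> x powr p))"
    by (intro nn_integral_cong) (auto simp: indicator_def P_def)
  have Pint: "P absolutely_integrable_on U"
    unfolding set_integrable_def
    by (rule integrableI_nonneg[OF Pm']) (use nneq fin P0 in \<open>auto simp: top.not_eq_extremum\<close>)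
  define I where "I = integral U P"
  have I_eq: "enn2real (set_nn_integral lebesgue U (\<lambda>x. ennreal (\<phi> x powr p))) = I"
  proof -
    have "set_nn_integral lebesgue U (\<lambda>x. ennreal (\<phi> x powr p)) = ennreal (LINT x|lebesgue. indicator U x *\<^sub>R P x)"
      unfolding nneq[symmetric] using Pint unfolding set_integrable_def
      by (intro nn_integral_eq_integral) (auto simp: P0)
    also have "(LINT x|lebesgue. indicator U x *\<^sub>R P x) = I"
      using set_lebesgue_integral_eq_integral(2)[OF Pint] by (simp add: I_def set_lebesgue_integral_def)
    finally show ?thesis using P0 by (simp add: I_def integral_nonneg set_lebesgue_integral_eq_integral(1)[OF Pint])
  qed
  have PU: "P integrable_on U" using set_lebesgue_integral_eq_integral(1)[OF Pint] .
  have PKa: "P absolutely_integrable_on K" by (rule set_integrable_subset[OF Pint Kleb KU])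
  have PK: "P integrable_on K" using set_lebesgue_integral_eq_integral(1)[OF PKa] .
  have PKle: "integral K P \<le> I"
    unfolding I_def by (rule integral_subset_le[OF KU PK PU]) (simp add: P0)
  have I0: "I \<ge> 0" unfolding I_def by (rule integral_nonneg[OF PU]) (simp add: P0)
  have \<phi>mK: "\<phi> \<in> borel_measurable (lebesgue_on K)" by (rule measurable_restrict_mono[OF \<phi>m KU])
  have gint: "(\<lambda>x. t + t powr (1 - p) * P x) integrable_on K" for t
    by (intro integrable_add integrable_on_const[OF Kl]) (use integrable_cmul[OF PK, of "t powr (1-p)"] in simp)
  show \<phi>K: "\<phi> absolutely_integrable_on K"
  proof (rule measurable_bounded_by_integrable_imp_absolutely_integrable[OF \<phi>mK Kleb gint[of 1]])
    fix x show "norm (\<phi> x) \<le> 1 + 1 powr (1 - p) * P x"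
      using young_simple[of 1 "\<phi> x" p] p \<phi>0[of x] by (simp add: P_def)
  qed
  have \<phi>Ki: "\<phi> integrable_on K" using set_lebesgue_integral_eq_integral(1)[OF \<phi>K] .
  define m where "m = measure lebesgue K"
  have m0: "m \<ge> 0" by (simp add: m_def)
  have main: "integral K \<phi> \<le> t * m + t powr (1 - p) * I" if t: "t > 0" for t
  proof -
    have "integral K \<phi> \<le> integral K (\<lambda>x. t + t powr (1 - p) * P x)"
      by (rule integral_le[OF \<phi>Ki gint]) (use young_simple[OF t \<phi>0 p] in \<open>simp add: P_def\<close>)
    also have "\<dots> = t * m + t powr (1 - p) * integral K P"
    proof -
      have a1: "(\<lambda>x. t powr (1-p) * P x) integrable_on K" using integrable_cmul[OF PK, of "t powr (1-p)"] by simp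
      have "integral K (\<lambda>x. t + t powr (1-p) * P x) = integral K (\<lambda>x. t) + integral K (\<lambda>x. t powr (1-p) * P x)"
        by (rule integral_add[OF integrable_on_const[OF Kl] a1])
      moreover have "integral K (\<lambda>x. t) = t * m"
        using integral_cmul[of K t "\<lambda>x. 1::real"] lmeasure_integral[OF Kl] by (simp add: m_def)
      moreover have "integral K (\<lambda>x. t powr (1-p) * P x) = t powr (1-p) * integral K P"
        using integral_cmul[of K "t powr (1-p)" P] by simp
      ultimately show ?thesis by simp
    qed
    also have "\<dots> \<le> t * m + t powr (1 - p) * I"
      using PKle by (simp add: mult_left_mono)
    finally show ?thesis .
  qed
  show "integral K \<phi> \<le> (measure lebesgue K + 1) * enn2real (set_nn_integral lebesgue U (\<lambda>x. ennreal (\<phi> x powr p))) powr (1/p)"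
    unfolding I_eq m_def[symmetric]
  proof (cases "I = 0")
    case True
    have "integral K \<phi> \<le> 0 + e" if e: "e > 0" for e
    proof -
      have "integral K \<phi> \<le> (e / (m + 1)) * m" using main[of "e / (m+1)"] e m0 True by simp
      also have "\<dots> \<le> e" using e m0 by (simp add: field_simps)
      finally show ?thesis by simp
    qed
    then have "integral K \<phi> \<le> 0" by (rule field_le_epsilon)
    then show "integral K \<phi> \<le> (m + 1) * I powr (1 / p)" using True by simp
  next
    case False
    then have Ipos: "I > 0" using I0 by simp
    define N where "N = I powr (1 / p)"
    have Npos: "N > 0" using Ipos by (simp add: N_def)
    have "N powr (1 - p) * I = N"
    proof -
      have "I = N powr p" using Ipos p by (simp add: N_def powr_powr)
      then have "N powr (1 - p) * I = N powr (1 - p + p)" using Npos by (simp add: powr_add[symmetric])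
      then show ?thesis using Npos by simp
    qed
    then have "integral K \<phi> \<le> N * m + N" using main[OF Npos] by simp
    then show "integral K \<phi> \<le> (m + 1) * I powr (1 / p)" by (simp add: N_def algebra_simps)
  qed
qed

theorem lemma2:
  fixes U F :: "'a::euclidean_space set"
    and f :: "'a \<Rightarrow> real" and h :: "'a \<Rightarrow> 'a"
    and p \<epsilon> :: real and k :: nat
  assumes p: "1 \<le> p"
    and U: "open U" "cball 0 1 \<subseteq> U"
    and f_smooth: "smooth_on UNIV f"
    and f_supp: "closure {v. f v \<noteq> 0} \<subseteq> cball 0 1"
    and f_nonneg: "\<And>v. f v \<ge> 0"
    and f_even: "\<And>v. f v = f (- v)"
    and f_int: "(f has_integral 1) UNIV"
    and h_bij: "bij_betw h UNIV (ball 0 1)"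
    and h_smooth: "smooth_on UNIV h"
    and h_inv_smooth: "smooth_on (ball 0 1) (inv h)"
    and eps: "\<epsilon> > 0"
    and F: "compact F" "F \<subseteq> interior (cball 0 1)"
  shows
    "(\<forall>\<omega>. Omega_p k p U \<omega> \<longrightarrow>
        (\<forall>x\<in>F. \<forall>vs. integrable lebesgue
            (\<lambda>v. pullback (sfrak h (\<epsilon> *\<^sub>R v)) \<omega> x vs * f v)) \<and>
        Omega_inf k F (R_eps h f \<epsilon> \<omega>))
     \<and> (\<forall>\<omega> \<eta> a b. Omega_p k p U \<omega> \<longrightarrow> Omega_p k p U \<eta> \<longrightarrow>
          (\<forall>x\<in>F. R_eps h f \<epsilon> (\<lambda>y vs. a * \<omega> y vs + b * \<eta> y vs) x
                 = (\<lambda>vs. a * R_eps h f \<epsilon> \<omega> x vs + b * R_eps h f \<epsilon> \<eta> x vs)))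
     \<and> (\<exists>C. \<forall>\<omega>. Omega_p k p U \<omega> \<longrightarrow>
          (AE x in lebesgue_on F. form_norm k (R_eps h f \<epsilon> \<omega> x) \<le> C * Lp_norm p k U \<omega>))"
proof -
  have h_ball: "h z \<in> ball 0 1" for z using h_bij by (auto dest: bij_betwE)
  have hh: "inv h (h z) = z" for z using bij_betw_imp_inj_on[OF h_bij] by (simp add: inv_f_f)
  have hinv: "h (inv h y) = y" if "y \<in> ball 0 1" for y
    using bij_betw_inv_into_right[OF h_bij that] by simp
  have hinj: "inj_on (inv h) (ball 0 1)" by (metis hinv inj_on_def)
  define Dh where "Dh z = frechet_derivative h (at z)" for z
  define Di where "Di y = frechet_derivative (inv h) (at y)" for y
  have hder: "(h has_derivative Dh z) (at z)" for z
    unfolding Dh_def using smooth_on_hasderiv[OF h_smooth] by simp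
  have Dider: "(inv h has_derivative Di y) (at y)" if "y \<in> ball 0 1" for y
    unfolding Di_def using smooth_on_hasderiv[OF h_inv_smooth that] .
  have lin_Dh: "linear (Dh z)" for z using hder has_derivative_linear by blast
  have lin_Di: "linear (Di y)" if "y \<in> ball 0 1" for y using Dider[OF that] has_derivative_linear by blast
  have invcont: "continuous_on (ball 0 1) (inv h)" by (rule smooth_on_cont[OF h_inv_smooth])
  have hcont: "continuous_on UNIV h" by (rule smooth_on_cont[OF h_smooth])
  have fcont: "continuous_on UNIV f" by (rule smooth_on_cont[OF f_smooth])
  have f0: "f v = 0" if "v \<notin> cball 0 1" for v
  proof (rule ccontr)
    assume "f v \<noteq> 0"
    then have "v \<in> closure {v. f v \<noteq> 0}" by (simp add: closure_def)
    then show False using f_supp that by blast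
  qed
  have Fball: "F \<subseteq> ball 0 1" using F(2) by simp
  have ballU: "ball 0 1 \<subseteq> U" using U(2) by auto
  have sfd: "frechet_derivative (sfrak h w) (at x) = (\<lambda>u. Dh (inv h x + w) (Di x u))"
    if x: "x \<in> ball 0 1" for x w
  proof -
    have "((\<lambda>y. inv h y + w) has_derivative (\<lambda>u. Di x u + 0)) (at x)"
      by (intro derivative_intros Dider[OF x])
    then have d1: "((\<lambda>y. inv h y + w) has_derivative (\<lambda>u. Di x u)) (at x)" by simp
    have "((\<lambda>y. h (inv h y + w)) has_derivative (\<lambda>u. Dh (inv h x + w) (Di x u))) (at x)"
      using diff_chain_at[OF d1, of h "Dh (inv h x + w)"] hder[of "inv h x + w"] by (simp add: o_def)
    then have "(sfrak h w has_derivative (\<lambda>u. Dh (inv h x + w) (Di x u))) (at x)"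
      by (rule has_derivative_transform_within_open[OF _ open_ball x]) (simp add: sfrak_def)
    then show ?thesis by (rule frechet_derivative_at[symmetric])
  qed
  have pb: "pullback (sfrak h (\<epsilon> *\<^sub>R v)) \<omega> x vs =
      \<omega> (h (inv h x + \<epsilon> *\<^sub>R v)) (map (\<lambda>u. Dh (inv h x + \<epsilon> *\<^sub>R v) (Di x u)) vs)"
    if x: "x \<in> ball 0 1" for x v \<omega> vs
    using x by (simp add: pullback_def sfd sfrak_def)
  define K where "K = (\<lambda>q. h (inv h (fst q) + \<epsilon> *\<^sub>R snd q)) ` (F \<times> cball 0 1)"
  have Kc: "compact K"
  proof -
    have c1: "continuous_on (F \<times> cball 0 1) (\<lambda>q. inv h (fst q) + \<epsilon> *\<^sub>R snd q)"
      by (intro continuous_intros continuous_on_compose2[OF invcont]) (use Fball in auto)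
    have "continuous_on (F \<times> cball 0 1) (\<lambda>q. h (inv h (fst q) + \<epsilon> *\<^sub>R snd q))"
      using continuous_on_compose2[OF hcont c1] by simp
    then show ?thesis unfolding K_def by (intro compact_continuous_image compact_Times F(1) compact_cball)
  qed
  have Kball: "K \<subseteq> ball 0 1" unfolding K_def using h_ball by auto
  have KU: "K \<subseteq> U" using Kball ballU by auto
  have aK: "h (inv h x + \<epsilon> *\<^sub>R v) \<in> K" if "x \<in> F" "v \<in> cball 0 1" for x v
    unfolding K_def using that by force
  have Kl: "K \<in> lmeasurable" by (rule lmeasurable_compact[OF Kc])
  have Kleb: "K \<in> sets lebesgue" using Kl by (simp add: fmeasurableD)
  define m where "m = measure lebesgue K"
  define J where "J y = jac (\<lambda>w. (1/\<epsilon>) *\<^sub>R Di y w)" for y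
  have Dicont: "continuous_on S (\<lambda>q. Di (a q) (c q))"
    if "continuous_on S a" "a ` S \<subseteq> ball 0 1" "continuous_on S c" for S a c
    unfolding Di_def by (rule smooth_deriv_cont_comp[OF h_inv_smooth that])
  have Dhcont: "continuous_on S (\<lambda>q. Dh (a q) (c q))"
    if "continuous_on S a" "continuous_on S c" for S a c
    unfolding Dh_def by (rule smooth_deriv_cont_comp[OF h_smooth that(1) _ that(2)]) simp
  have Jcont: "continuous_on (ball 0 1) J"
    unfolding J_def
    by (intro continuous_on_jac continuous_intros Dicont) auto
  have JcontK: "continuous_on K J" using continuous_on_subset[OF Jcont Kball] .
  define Kern where "Kern vs bs x y = J y * (\<Prod>i<k. Dh (inv h y) (Di x (vs!i)) \<bullet> bs!i) * f ((1/\<epsilon>) *\<^sub>R (inv h y - inv h x))"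
    for vs bs :: "'a list" and x y
  have Kcont: "continuous_on (F \<times> K) (\<lambda>q. Kern vs bs (fst q) (snd q))" for vs bs
  proof -
    have sub1: "fst ` (F \<times> K) \<subseteq> ball 0 1" "snd ` (F \<times> K) \<subseteq> ball 0 1" using Fball Kball by auto
    have ci1: "continuous_on (F \<times> K) (\<lambda>q. inv h (fst q))"
      using continuous_on_compose2[OF invcont continuous_on_fst[OF continuous_on_id] sub1(1)] by simp
    have ci2: "continuous_on (F \<times> K) (\<lambda>q. inv h (snd q))"
      using continuous_on_compose2[OF invcont continuous_on_snd[OF continuous_on_id] sub1(2)] by simp
    have cJ: "continuous_on (F \<times> K) (\<lambda>q. J (snd q))"
      using continuous_on_compose2[OF Jcont continuous_on_snd[OF continuous_on_id] sub1(2)] by simp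
    have cD: "continuous_on (F \<times> K) (\<lambda>q. Dh (inv h (snd q)) (Di (fst q) (vs!i)))" for i
      by (intro Dhcont ci2 Dicont continuous_intros) (use sub1 in auto)
    have cf: "continuous_on (F \<times> K) (\<lambda>q. f ((1/\<epsilon>) *\<^sub>R (inv h (snd q) - inv h (fst q))))"
      by (intro continuous_on_compose2[OF fcont] continuous_intros ci1 ci2) auto
    show ?thesis unfolding Kern_def
      by (intro continuous_intros cJ cD cf)
  qed
  have Uleb: "U \<in> sets lebesgue" using U(1) by (simp add: borel_open)
  have core: "(\<forall>x\<in>F. \<forall>vs. integrable lebesgue (\<lambda>v. pullback (sfrak h (\<epsilon> *\<^sub>R v)) \<omega> x vs * f v))
    \<and> (\<forall>x\<in>F. \<forall>vs. length vs = k \<longrightarrow> R_eps h f \<epsilon> \<omega> x vs = (\<Sum>bs\<in>BL k. integral K (\<lambda>y. Kern vs bs x y * \<omega> y bs)))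
    \<and> (\<forall>bs\<in>BL k. (\<lambda>y. \<omega> y bs) absolutely_integrable_on K)
    \<and> (\<lambda>y. form_norm k (\<omega> y)) absolutely_integrable_on K
    \<and> integral K (\<lambda>y. form_norm k (\<omega> y)) \<le> (m + 1) * Lp_norm p k U \<omega>"
    if om: "Omega_p k p U \<omega>" for \<omega>
  proof -
    have kf: "kcovector k (\<omega> y)" if "y \<in> U" for y using om that by (auto simp: Omega_p_def is_kform_on_def)
    have meas: "(\<lambda>y. \<omega> y vs) \<in> borel_measurable (lebesgue_on U)" for vs using om by (auto simp: Omega_p_def)
    have fin: "Lp_pow p k U \<omega> < \<infinity>" using om by (auto simp: Omega_p_def)
    have \<phi>m: "(\<lambda>y. form_norm k (\<omega> y)) \<in> borel_measurable (lebesgue_on U)"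
      unfolding form_norm_def using meas[measurable] by measurable
    note L1 = Lp_L1[OF p Uleb KU Kl form_norm_nonneg \<phi>m fin[unfolded Lp_pow_def]]
    have c4: "(\<lambda>y. form_norm k (\<omega> y)) absolutely_integrable_on K" using L1(1) .
    have c5: "integral K (\<lambda>y. form_norm k (\<omega> y)) \<le> (m + 1) * Lp_norm p k U \<omega>"
      using L1(2) by (simp add: Lp_norm_def Lp_pow_def m_def)
    have \<phi>K: "(\<lambda>y. form_norm k (\<omega> y)) integrable_on K" using set_lebesgue_integral_eq_integral(1)[OF c4] .
    have c3: "(\<lambda>y. \<omega> y bs) absolutely_integrable_on K" if bs: "bs \<in> BL k" for bs
    proof (rule measurable_bounded_by_integrable_imp_absolutely_integrable[OF measurable_restrict_mono[OF meas KU] Kleb])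
      show "(\<lambda>y. sqrt (fact k) * form_norm k (\<omega> y)) integrable_on K"
        using integrable_cmul[OF \<phi>K, of "sqrt (fact k)"] by simp
      show "norm (\<omega> y bs) \<le> sqrt (fact k) * form_norm k (\<omega> y)" if "y \<in> K" for y
        using kcov_le_form_norm[OF bs] by simp
    qed
    have c12: "integrable lebesgue (\<lambda>v. pullback (sfrak h (\<epsilon> *\<^sub>R v)) \<omega> x vs * f v) \<and>
        (length vs = k \<longrightarrow> R_eps h f \<epsilon> \<omega> x vs = (\<Sum>bs\<in>BL k. integral K (\<lambda>y. Kern vs bs x y * \<omega> y bs)))"
      if x: "x \<in> F" for x vs
    proof (cases "length vs = k")
      case False
      have "pullback (sfrak h (\<epsilon> *\<^sub>R v)) \<omega> x vs = 0" for v
      proof -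
        have "h (inv h x + \<epsilon> *\<^sub>R v) \<in> U" using h_ball ballU by auto
        then show ?thesis using kf False pb x Fball unfolding kcovector_def by auto
      qed
      then show ?thesis using False by simp
    next
      case len: True
      have xb: "x \<in> ball 0 1" using x Fball by auto
      define C where "C bs v = (\<Prod>i<k. Dh (inv h x + \<epsilon> *\<^sub>R v) (Di x (vs!i)) \<bullet> bs!i)" for bs v
      have exp: "pullback (sfrak h (\<epsilon> *\<^sub>R v)) \<omega> x vs * f v =
          (\<Sum>bs\<in>BL k. C bs v * \<omega> (h (inv h x + \<epsilon> *\<^sub>R v)) bs * f v)" for v
      proof -
        have "h (inv h x + \<epsilon> *\<^sub>R v) \<in> U" using h_ball ballU by auto
        then have "\<omega> (h (inv h x + \<epsilon> *\<^sub>R v)) (map (\<lambda>u. Dh (inv h x + \<epsilon> *\<^sub>R v) (Di x u)) vs) =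
            (\<Sum>bs\<in>BL k. C bs v * \<omega> (h (inv h x + \<epsilon> *\<^sub>R v)) bs)"
          using kcov_expand[OF kf, of _ "map (\<lambda>u. Dh (inv h x + \<epsilon> *\<^sub>R v) (Di x u)) vs"] len
          by (simp add: C_def)
        then show ?thesis using pb[OF xb] by (simp add: sum_distrib_right)
      qed
      have Ccont: "continuous_on UNIV (C bs)" for bs
        unfolding C_def[abs_def]
        by (intro continuous_intros Dhcont) 
      have cv: "integrable lebesgue (\<lambda>v. C bs v * \<omega> (h (inv h x + \<epsilon> *\<^sub>R v)) bs * f v) \<and>
          (LINT v|lebesgue. C bs v * \<omega> (h (inv h x + \<epsilon> *\<^sub>R v)) bs * f v) = integral K (\<lambda>y. Kern vs bs x y * \<omega> y bs)"
        if bs: "bs \<in> BL k" for bs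
      proof -
        note cva = cv_apply[OF eps hinv Dider hinj Kc Kball aK[OF x] hh Ccont fcont f0 invcont JcontK[unfolded J_def] c3[OF bs]]
        have "integral K (\<lambda>y. (jac (\<lambda>w. (1/\<epsilon>) *\<^sub>R Di y w) * C bs ((1/\<epsilon>) *\<^sub>R (inv h y - inv h x)) * f ((1/\<epsilon>) *\<^sub>R (inv h y - inv h x))) * \<omega> y bs)
            = integral K (\<lambda>y. Kern vs bs x y * \<omega> y bs)"
          using eps by (intro integral_cong) (simp add: C_def Kern_def J_def)
        then show ?thesis using cva by simp
      qed
      have "integrable lebesgue (\<lambda>v. \<Sum>bs\<in>BL k. C bs v * \<omega> (h (inv h x + \<epsilon> *\<^sub>R v)) bs * f v)"
        using Bochner_Integration.integrable_sum[where I="BL k" and M=lebesgue and f="\<lambda>bs v. C bs v * \<omega> (h (inv h x + \<epsilon> *\<^sub>R v)) bs * f v"] cv by blast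
      moreover have "R_eps h f \<epsilon> \<omega> x vs = (\<Sum>bs\<in>BL k. integral K (\<lambda>y. Kern vs bs x y * \<omega> y bs))"
        unfolding R_eps_def exp
        using Bochner_Integration.integral_sum[where I="BL k" and M=lebesgue and f="\<lambda>bs v. C bs v * \<omega> (h (inv h x + \<epsilon> *\<^sub>R v)) bs * f v"] cv by simp
      ultimately show ?thesis unfolding exp by simp
    qed
    show ?thesis using c12 c3 c4 c5 by blast
  qed
  have bnd: "\<forall>q\<in>BL k \<times> BL k. \<exists>B. \<forall>z\<in>F \<times> K. \<bar>Kern (fst q) (snd q) (fst z) (snd z)\<bar> \<le> B"
  proof
    fix q :: "'a list \<times> 'a list"
    have "bounded ((\<lambda>z. Kern (fst q) (snd q) (fst z) (snd z)) ` (F \<times> K))"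
      by (intro compact_imp_bounded compact_continuous_image Kcont compact_Times F(1) Kc)
    then show "\<exists>B. \<forall>z\<in>F \<times> K. \<bar>Kern (fst q) (snd q) (fst z) (snd z)\<bar> \<le> B"
      unfolding bounded_iff by auto
  qed
  then obtain B where B: "\<And>q z. q \<in> BL k \<times> BL k \<Longrightarrow> z \<in> F \<times> K \<Longrightarrow> \<bar>Kern (fst q) (snd q) (fst z) (snd z)\<bar> \<le> B q"
    by (metis bchoice)
  define MB where "MB = (\<Sum>q\<in>BL k \<times> BL k. \<bar>B q\<bar>)"
  have MB0: "MB \<ge> 0" unfolding MB_def by (simp add: sum_nonneg)
  have KB: "\<bar>Kern vs bs x y\<bar> \<le> MB" if "vs \<in> BL k" "bs \<in> BL k" "x \<in> F" "y \<in> K" for vs bs x y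
  proof -
    have "\<bar>Kern vs bs x y\<bar> \<le> B (vs, bs)" using B[of "(vs, bs)" "(x, y)"] that by auto
    also have "\<dots> \<le> \<bar>B (vs, bs)\<bar>" by simp
    also have "\<dots> \<le> MB" unfolding MB_def using that
      by (intro member_le_sum[where f="\<lambda>q. \<bar>B q\<bar>"]) (auto simp: finite_BL)
    finally show ?thesis .
  qed
  define Cst where "Cst = real (card (BL k :: 'a list set)) * real (card (BL k :: 'a list set)) * MB * sqrt (fact k) * (m + 1)"
  have Fleb: "F \<in> sets lebesgue" using lmeasurable_compact[OF F(1)] by (simp add: fmeasurableD)
  have ptb: "form_norm k (R_eps h f \<epsilon> \<omega> x) \<le> Cst * Lp_norm p k U \<omega>"
    if om: "Omega_p k p U \<omega>" and x: "x \<in> F" for \<omega> x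
  proof -
    note co = core[OF om]
    define \<Phi> where "\<Phi> = integral K (\<lambda>y. form_norm k (\<omega> y))"
    have \<phi>K: "(\<lambda>y. form_norm k (\<omega> y)) integrable_on K" using set_lebesgue_integral_eq_integral(1) co by blast
    have one: "\<bar>integral K (\<lambda>y. Kern vs bs x y * \<omega> y bs)\<bar> \<le> MB * sqrt (fact k) * \<Phi>"
      if vs: "vs \<in> BL k" and bs: "bs \<in> BL k" for vs bs
    proof -
      have c3: "(\<lambda>y. \<omega> y bs) absolutely_integrable_on K" using co bs by blast
      have i1: "(\<lambda>y. Kern vs bs x y * \<omega> y bs) integrable_on K"
        using param_cont(2)[OF F(1) Kc Kcont[of vs bs] c3 x]
        by (simp add: set_lebesgue_integral_eq_integral(1))
      have i2: "(\<lambda>y. MB * sqrt (fact k) * form_norm k (\<omega> y)) integrable_on K"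
        using integrable_cmul[OF \<phi>K, of "MB * sqrt (fact k)"] by simp
      have "norm (integral K (\<lambda>y. Kern vs bs x y * \<omega> y bs)) \<le> integral K (\<lambda>y. MB * sqrt (fact k) * form_norm k (\<omega> y))"
      proof (rule Henstock_Kurzweil_Integration.integral_norm_bound_integral[OF i1 i2])
        fix y assume y: "y \<in> K"
        have "\<bar>Kern vs bs x y\<bar> * \<bar>\<omega> y bs\<bar> \<le> MB * (sqrt (fact k) * form_norm k (\<omega> y))"
          by (intro mult_mono KB vs bs x y kcov_le_form_norm bs MB0) auto
        then show "norm (Kern vs bs x y * \<omega> y bs) \<le> MB * sqrt (fact k) * form_norm k (\<omega> y)"
          by (simp add: abs_mult mult.assoc)
      qed
      also have "\<dots> = MB * sqrt (fact k) * \<Phi>" unfolding \<Phi>_def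
        using integral_cmul[of K "MB * sqrt (fact k)" "\<lambda>y. form_norm k (\<omega> y)"] by simp
      finally show ?thesis by simp
    qed
    have two: "\<bar>R_eps h f \<epsilon> \<omega> x vs\<bar> \<le> real (card (BL k :: 'a list set)) * (MB * sqrt (fact k) * \<Phi>)"
      if vs: "vs \<in> BL k" for vs
    proof -
      have len: "length vs = k" using vs by (simp add: BL_def)
      have "\<bar>R_eps h f \<epsilon> \<omega> x vs\<bar> = \<bar>\<Sum>bs\<in>BL k. integral K (\<lambda>y. Kern vs bs x y * \<omega> y bs)\<bar>"
        using co x len by simp
      also have "\<dots> \<le> (\<Sum>bs\<in>BL k. \<bar>integral K (\<lambda>y. Kern vs bs x y * \<omega> y bs)\<bar>)" by (rule sum_abs)
      also have "\<dots> \<le> real (card (BL k :: 'a list set)) * (MB * sqrt (fact k) * \<Phi>)"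
        by (rule sum_bounded_above) (use one vs in auto)
      finally show ?thesis .
    qed
    have "form_norm k (R_eps h f \<epsilon> \<omega> x) \<le> (\<Sum>vs\<in>BL k. \<bar>R_eps h f \<epsilon> \<omega> x vs\<bar>)" by (rule form_norm_le_sum)
    also have "\<dots> \<le> real (card (BL k :: 'a list set)) * (real (card (BL k :: 'a list set)) * (MB * sqrt (fact k) * \<Phi>))"
      by (rule sum_bounded_above) (use two in auto)
    also have "\<dots> \<le> real (card (BL k :: 'a list set)) * (real (card (BL k :: 'a list set)) * (MB * sqrt (fact k) * ((m + 1) * Lp_norm p k U \<omega>)))"
      using co MB0 unfolding \<Phi>_def by (intro mult_left_mono) auto
    also have "\<dots> = Cst * Lp_norm p k U \<omega>" by (simp add: Cst_def)
    finally show ?thesis .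
  qed
  have kcovR: "kcovector k (R_eps h f \<epsilon> \<omega> x)" if om: "Omega_p k p U \<omega>" and x: "x \<in> F" for \<omega> x
  proof -
    note co = core[OF om]
    have xb: "x \<in> ball 0 1" using x Fball by auto
    define Y where "Y v = h (inv h x + \<epsilon> *\<^sub>R v)" for v
    define D where "D v = (\<lambda>u. Dh (inv h x + \<epsilon> *\<^sub>R v) (Di x u))" for v
    have kY: "kcovector k (\<omega> (Y v))" for v
    proof -
      have "Y v \<in> U" using h_ball ballU unfolding Y_def by blast
      then show ?thesis using om by (auto simp: Omega_p_def is_kform_on_def)
    qed
    have linD: "linear (D v)" for v
      unfolding D_def using linear_compose[OF lin_Di[OF xb] lin_Dh] by (simp add: o_def)
    have pbx: "pullback (sfrak h (\<epsilon> *\<^sub>R v)) \<omega> x vs = \<omega> (Y v) (map (D v) vs)" for v vs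
      using pb[OF xb] by (simp add: Y_def D_def)
    have Rx: "R_eps h f \<epsilon> \<omega> x vs = (LINT v|lebesgue. \<omega> (Y v) (map (D v) vs) * f v)" for vs
      by (simp add: R_eps_def pbx)
    have Ix: "integrable lebesgue (\<lambda>v. \<omega> (Y v) (map (D v) vs) * f v)" for vs
      using co x by (simp only: pbx[symmetric])
    show ?thesis unfolding kcovector_def
    proof (intro conjI allI impI)
      fix vs :: "'a list" assume "length vs \<noteq> k"
      then have "\<omega> (Y v) (map (D v) vs) = 0" for v using kY[of v] unfolding kcovector_def by auto
      then show "R_eps h f \<epsilon> \<omega> x vs = 0" by (simp add: Rx)
    next
      fix vs :: "'a list" and i assume len: "length vs = k" and i: "i < k"
      have lin1: "linear (\<lambda>u. \<omega> (Y v) ((map (D v) vs)[i := u]))" for v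
        using kY[of v] len i unfolding kcovector_def by auto
      have add: "\<omega> (Y v) (map (D v) (vs[i := w1 + w2])) = \<omega> (Y v) (map (D v) (vs[i := w1])) + \<omega> (Y v) (map (D v) (vs[i := w2]))" for v w1 w2
        using linear_add[OF lin1[of v]] linear_add[OF linD[of v]] by (simp add: map_update)
      have scl: "\<omega> (Y v) (map (D v) (vs[i := c *\<^sub>R w])) = c * \<omega> (Y v) (map (D v) (vs[i := w]))" for v c w
        using linear_scale[OF lin1[of v]] linear_scale[OF linD[of v]] by (simp add: map_update)
      show "linear (\<lambda>w. R_eps h f \<epsilon> \<omega> x (vs[i := w]))"
      proof (rule linearI)
        fix w1 w2
        show "R_eps h f \<epsilon> \<omega> x (vs[i := w1 + w2]) = R_eps h f \<epsilon> \<omega> x (vs[i := w1]) + R_eps h f \<epsilon> \<omega> x (vs[i := w2])"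
          unfolding Rx add distrib_right by (rule Bochner_Integration.integral_add[OF Ix Ix])
      next
        fix c :: real and w
        show "R_eps h f \<epsilon> \<omega> x (vs[i := c *\<^sub>R w]) = c *\<^sub>R R_eps h f \<epsilon> \<omega> x (vs[i := w])"
          unfolding Rx scl by (simp add: mult.assoc)
      qed
    next
      fix vs :: "'a list" and i j assume len: "length vs = k" and ij: "i < j" "j < k" and eq: "vs ! i = vs ! j"
      have "\<omega> (Y v) (map (D v) vs) = 0" for v
        using kY[of v] len ij eq unfolding kcovector_def by auto
      then show "R_eps h f \<epsilon> \<omega> x vs = 0" by (simp add: Rx)
    qed
  qed
  have AEb: "AE x in lebesgue_on F. form_norm k (R_eps h f \<epsilon> \<omega> x) \<le> Cst * Lp_norm p k U \<omega>"
    if om: "Omega_p k p U \<omega>" for \<omega>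
    by (rule AE_I2) (use ptb[OF om] Fleb in \<open>auto simp: space_restrict_space\<close>)
  have oinf: "Omega_inf k F (R_eps h f \<epsilon> \<omega>)" if om: "Omega_p k p U \<omega>" for \<omega>
  proof -
    note co = core[OF om]
    have meas: "(\<lambda>x. R_eps h f \<epsilon> \<omega> x vs) \<in> borel_measurable (lebesgue_on F)" for vs
    proof -
      have "continuous_on F (\<lambda>x. R_eps h f \<epsilon> \<omega> x vs)"
      proof (cases "length vs = k")
        case True
        have "continuous_on F (\<lambda>x. \<Sum>bs\<in>BL k. integral K (\<lambda>y. Kern vs bs x y * \<omega> y bs))"
        proof (rule continuous_on_sum)
          fix bs :: "'a list" assume bs: "bs \<in> BL k"
          have c3: "(\<lambda>y. \<omega> y bs) absolutely_integrable_on K" using co bs by blast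
          show "continuous_on F (\<lambda>x. integral K (\<lambda>y. Kern vs bs x y * \<omega> y bs))"
            by (rule param_cont(1)[OF F(1) Kc Kcont[of vs bs] c3])
        qed
        then show ?thesis
          by (rule continuous_on_cong[THEN iffD1, rotated 2]) (use co True in auto)
      next
        case False
        have "R_eps h f \<epsilon> \<omega> x vs = 0" if "x \<in> F" for x
          using kcovR[OF om that] False unfolding kcovector_def by auto
        then show ?thesis
          using continuous_on_cong[of F F "\<lambda>x. R_eps h f \<epsilon> \<omega> x vs" "\<lambda>x. 0"] continuous_on_const by auto
      qed
      then show ?thesis by (rule continuous_imp_measurable_on_sets_lebesgue[OF _ Fleb])
    qed
    show ?thesis unfolding Omega_inf_def is_kform_on_def
      using kcovR[OF om] meas AEb[OF om] by blast
  qed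
  have lin: "R_eps h f \<epsilon> (\<lambda>y vs. a * \<omega> y vs + b * \<eta> y vs) x
      = (\<lambda>vs. a * R_eps h f \<epsilon> \<omega> x vs + b * R_eps h f \<epsilon> \<eta> x vs)"
    if om: "Omega_p k p U \<omega>" and et: "Omega_p k p U \<eta>" and x: "x \<in> F" for \<omega> \<eta> a b x
  proof
    fix vs
    have I1: "integrable lebesgue (\<lambda>v. pullback (sfrak h (\<epsilon> *\<^sub>R v)) \<omega> x vs * f v)" using core[OF om] x by blast
    have I2: "integrable lebesgue (\<lambda>v. pullback (sfrak h (\<epsilon> *\<^sub>R v)) \<eta> x vs * f v)" using core[OF et] x by blast
    have eq: "pullback (sfrak h (\<epsilon> *\<^sub>R v)) (\<lambda>y vs. a * \<omega> y vs + b * \<eta> y vs) x vs * f v =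
        a * (pullback (sfrak h (\<epsilon> *\<^sub>R v)) \<omega> x vs * f v) + b * (pullback (sfrak h (\<epsilon> *\<^sub>R v)) \<eta> x vs * f v)" for v
      by (simp add: pullback_def algebra_simps)
    show "R_eps h f \<epsilon> (\<lambda>y vs. a * \<omega> y vs + b * \<eta> y vs) x vs = a * R_eps h f \<epsilon> \<omega> x vs + b * R_eps h f \<epsilon> \<eta> x vs"
      unfolding R_eps_def eq
      using I1 I2 by (simp add: Bochner_Integration.integral_add)
  qed
  have c1: "\<forall>\<omega>. Omega_p k p U \<omega> \<longrightarrow>
        (\<forall>x\<in>F. \<forall>vs. integrable lebesgue (\<lambda>v. pullback (sfrak h (\<epsilon> *\<^sub>R v)) \<omega> x vs * f v)) \<and>
        Omega_inf k F (R_eps h f \<epsilon> \<omega>)"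
  proof (intro allI impI conjI)
    fix \<omega> assume om: "Omega_p k p U \<omega>"
    show "\<forall>x\<in>F. \<forall>vs. integrable lebesgue (\<lambda>v. pullback (sfrak h (\<epsilon> *\<^sub>R v)) \<omega> x vs * f v)"
      using core[OF om] by blast
    show "Omega_inf k F (R_eps h f \<epsilon> \<omega>)" by (rule oinf[OF om])
  qed
  have c2: "\<forall>\<omega> \<eta> a b. Omega_p k p U \<omega> \<longrightarrow> Omega_p k p U \<eta> \<longrightarrow>
          (\<forall>x\<in>F. R_eps h f \<epsilon> (\<lambda>y vs. a * \<omega> y vs + b * \<eta> y vs) x
                 = (\<lambda>vs. a * R_eps h f \<epsilon> \<omega> x vs + b * R_eps h f \<epsilon> \<eta> x vs))"
    using lin by blast
  have c3: "\<exists>C. \<forall>\<omega>. Omega_p k p U \<omega> \<longrightarrow>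
          (AE x in lebesgue_on F. form_norm k (R_eps h f \<epsilon> \<omega> x) \<le> C * Lp_norm p k U \<omega>)"
    using AEb by blast
  show ?thesis using c1 c2 c3 by blast
qed

end
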